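(* Let $(\theta^k)_k$ be a sequence of Borel probability measures on $\mathbb{R}_+$, absolutely continuous with respect to Lebesgue measure, with densities $f_{\theta^k}=\sum_{m=1}^\infty \xi^k_m \mathbf{1}_{[m-1,m)}$ where $\xi^k=(\xi^k_1,\xi^k_2,\dots)$ is a probability distribution on the positive integers. Then $(\theta^k)_k$ satisfies the long-term condition (LTC) if and only if $\sum_{m=1}^\infty|\xi^k_{m+1}-\xi^k_m|\to0$ as $k\to\infty$.
   Context: For a Borel probability measure $\theta$ on $\mathbb{R}_+$ and $s\geq0$, $TV_s(\theta)=\sup_{Q\in\mathcal{B}(\mathbb{R}_+)}|\theta(Q)-\theta(Q+s)|$. A sequence $(\theta^k)_{k\ge1}$ satisfies the LTC if for every $S>0$, $\sup_{0\leq s\leq S}TV_s(\theta^k)\to0$ as $k\to\infty$. *)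

theory Defs
  imports "HOL-Probability.Probability"
begin

text \<open>TV_s(theta) = sup over Borel Q subset of R_+ of |theta(Q) - theta(Q+s)|.
  Measures on R_+ are represented as measures on the real line (Borel sets) supported on [0,oo).\<close>
definition TV :: "real measure \<Rightarrow> real \<Rightarrow> real" where
  "TV \<theta> s = (SUP Q \<in> {Q. Q \<in> sets borel \<and> Q \<subseteq> {0..}}.
       \<bar>measure \<theta> Q - measure \<theta> ((\<lambda>x. x + s) ` Q)\<bar>)"

definition LTC :: "(nat \<Rightarrow> real measure) \<Rightarrow> bool" where
  "LTC \<theta> \<longleftrightarrow> (\<forall>S>0. (\<lambda>k. SUP s \<in> {0..S}. TV (\<theta> k) s) \<longlonglongrightarrow> 0)"

end

theory Submission imports Defs begin

definition ff :: "(nat \<Rightarrow> real) \<Rightarrow> real \<Rightarrow> real" where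
  "ff c x = (\<Sum>m. c m * indicator {real m..<real (Suc m)} x)"

lemma mem_I: "x \<in> {real m..<real (Suc m)} \<longleftrightarrow> 0 \<le> x \<and> m = nat \<lfloor>x\<rfloor>"
proof
  assume "x \<in> {real m..<real (Suc m)}"
  then have "real m \<le> x" "x < real m + 1" by auto
  then have "\<lfloor>x\<rfloor> = int m" by (simp add: floor_eq_iff)
  then show "0 \<le> x \<and> m = nat \<lfloor>x\<rfloor>" using \<open>real m \<le> x\<close> by simp
next
  assume a: "0 \<le> x \<and> m = nat \<lfloor>x\<rfloor>"
  then have "real m = real_of_int \<lfloor>x\<rfloor>" by simp
  moreover have "real_of_int \<lfloor>x\<rfloor> \<le> x" "x < real_of_int \<lfloor>x\<rfloor> + 1" using floor_correct[of x] by auto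
  ultimately have "real m \<le> x" "x < real m + 1" by linarith+
  then show "x \<in> {real m..<real (Suc m)}" by simp
qed

lemma ff_sums: fixes c :: "nat \<Rightarrow> real" shows "(\<lambda>m. c m * indicator {real m..<real (Suc m)} x) sums (if 0 \<le> x then c (nat \<lfloor>x\<rfloor>) else 0)"
proof -
  have "(\<lambda>m. c m * indicator {real m..<real (Suc m)} x) = (\<lambda>m. if m = nat \<lfloor>x\<rfloor> then (if 0 \<le> x then c m else 0) else 0)"
  proof
    fix m show "c m * indicator {real m..<real (Suc m)} x = (if m = nat \<lfloor>x\<rfloor> then (if 0 \<le> x then c m else 0) else 0)"
    proof (cases "x \<in> {real m..<real (Suc m)}")
      case True
      then have "0 \<le> x" "m = nat \<lfloor>x\<rfloor>" using mem_I by blast+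
      then show ?thesis using True by simp
    next
      case False
      then have "\<not> (0 \<le> x \<and> m = nat \<lfloor>x\<rfloor>)" using mem_I by blast
      then show ?thesis using False by auto
    qed
  qed
  then show ?thesis using sums_single[of "nat \<lfloor>x\<rfloor>" "\<lambda>m. if 0 \<le> x then c m else 0"] by simp
qed

lemma ff_eq: "ff c x = (if 0 \<le> x then c (nat \<lfloor>x\<rfloor>) else 0)"
  unfolding ff_def by (rule sums_unique[OF ff_sums, symmetric])

lemma ff_meas[measurable]: "ff c \<in> borel_measurable borel"
  unfolding ff_def by measurable

lemma ff_ennreal: assumes "\<And>m. c m \<ge> 0"
  shows "ennreal (ff c x) = (\<Sum>m. ennreal (c m * indicator {real m..<real (Suc m)} x))"
  unfolding ff_def
  by (rule suminf_ennreal2[symmetric]) (use assms sums_summable[OF ff_sums] in \<open>simp_all add: indicator_def\<close>)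


lemma Ico_disj: assumes "x \<in> {real m..<real (Suc m)}" "x \<in> {real n..<real (Suc n)}" shows "m = n"
proof -
  have "m = nat \<lfloor>x\<rfloor>" using assms(1) mem_I by blast
  moreover have "n = nat \<lfloor>x\<rfloor>" using assms(2) mem_I by blast
  ultimately show ?thesis by simp
qed

lemma shift_Ico: "(\<lambda>x::real. x + 1) ` {real m..<real (Suc m)} = {real (Suc m)..<real (Suc (Suc m))}"
proof
  show "(\<lambda>x::real. x + 1) ` {real m..<real (Suc m)} \<subseteq> {real (Suc m)..<real (Suc (Suc m))}" by auto
next
  show "{real (Suc m)..<real (Suc (Suc m))} \<subseteq> (\<lambda>x::real. x + 1) ` {real m..<real (Suc m)}"
  proof
    fix y assume "y \<in> {real (Suc m)..<real (Suc (Suc m))}"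
    then have "y - 1 \<in> {real m..<real (Suc m)}" by auto
    then show "y \<in> (\<lambda>x::real. x + 1) ` {real m..<real (Suc m)}" by (rule rev_image_eqI) simp
  qed
qed

lemma shift_sets: assumes "Q \<in> sets borel" shows "(\<lambda>x::real. x + s) ` Q \<in> sets borel"
proof -
  have "(\<lambda>x::real. x + s) ` Q = (\<lambda>x. x - s) -` Q \<inter> space borel"
  proof
    show "(\<lambda>x::real. x + s) ` Q \<subseteq> (\<lambda>x. x - s) -` Q \<inter> space borel" by auto
    show "(\<lambda>x. x - s) -` Q \<inter> space borel \<subseteq> (\<lambda>x::real. x + s) ` Q"
    proof
      fix y assume "y \<in> (\<lambda>x. x - s) -` Q \<inter> space borel"
      then have "y - s \<in> Q" by simp
      then show "y \<in> (\<lambda>x::real. x + s) ` Q" by (rule rev_image_eqI) simp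
    qed
  qed
  moreover have "(\<lambda>x::real. x - s) \<in> borel_measurable borel" by measurable
  ultimately show ?thesis using measurable_sets[OF _ assms] by metis
qed

lemma shift_ind: "indicator ((\<lambda>x::real. x + s) ` Q) (x + s) = (indicator Q x :: ennreal)"
proof -
  have "x + s \<in> (\<lambda>x::real. x + s) ` Q \<longleftrightarrow> x \<in> Q" by auto
  then show ?thesis by (simp add: indicator_def)
qed

lemma enn_tri: "0 \<le> (b::real) \<Longrightarrow> ennreal a \<le> ennreal b + ennreal \<bar>a - b\<bar>"
proof -
  assume b: "0 \<le> b"
  have "ennreal b + ennreal \<bar>a - b\<bar> = ennreal (b + \<bar>a - b\<bar>)" using b by (simp add: ennreal_plus)
  moreover have "ennreal a \<le> ennreal (b + \<bar>a - b\<bar>)" by (rule ennreal_leI) simp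
  ultimately show ?thesis by simp
qed

definition DD :: "(nat \<Rightarrow> real) \<Rightarrow> real" where "DD c = (\<Sum>m. \<bar>c (Suc m) - c m\<bar>)"

context
  fixes c :: "nat \<Rightarrow> real" and M :: "real measure"
  assumes c0: "\<And>m. c m \<ge> 0" and cs: "c sums 1"
    and M: "M = density lborel (\<lambda>x. ennreal (ff c x))"
begin

lemma ff_nonneg: "ff c x \<ge> 0"
  using c0 by (simp add: ff_eq)

lemma sets_M[simp]: "sets M = sets borel"
  by (simp add: M)

lemma space_M[simp]: "space M = UNIV"
  by (simp add: M)

lemma emeasure_M: "A \<in> sets borel \<Longrightarrow> emeasure M A = (\<integral>\<^sup>+ x. ennreal (ff c x) * indicator A x \<partial>lborel)"
  unfolding M by (rule emeasure_density) auto

lemma emeasure_I: "emeasure M {real m..<real (Suc m)} = ennreal (c m)"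
proof -
  have "emeasure M {real m..<real (Suc m)} = (\<integral>\<^sup>+ x. ennreal (ff c x) * indicator {real m..<real (Suc m)} x \<partial>lborel)"
    by (rule emeasure_M) simp
  also have "\<dots> = (\<integral>\<^sup>+ x. ennreal (c m) * indicator {real m..<real (Suc m)} x \<partial>lborel)"
  proof (rule nn_integral_cong)
    fix x
    show "ennreal (ff c x) * indicator {real m..<real (Suc m)} x = ennreal (c m) * indicator {real m..<real (Suc m)} x"
    proof (cases "x \<in> {real m..<real (Suc m)}")
      case True
      then have "0 \<le> x" "m = nat \<lfloor>x\<rfloor>" using mem_I by blast+
      then show ?thesis by (simp add: ff_eq)
    qed simp
  qed
  also have "\<dots> = ennreal (c m)"
    by (subst nn_integral_cmult_indicator) simp_all
  finally show ?thesis .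
qed

lemma summ_c: "summable c" using cs by (rule sums_summable)

lemma total: "emeasure M UNIV = 1"
proof -
  have "emeasure M UNIV = (\<integral>\<^sup>+ x. ennreal (ff c x) \<partial>lborel)"
    using emeasure_M[of UNIV] by simp
  also have "\<dots> = (\<integral>\<^sup>+ x. (\<Sum>m. ennreal (c m) * indicator {real m..<real (Suc m)} x) \<partial>lborel)"
  proof (rule nn_integral_cong)
    fix x show "ennreal (ff c x) = (\<Sum>m. ennreal (c m) * indicator {real m..<real (Suc m)} x)"
      using ff_ennreal[of c x] c0 by (simp add: ennreal_mult' ennreal_indicator)
  qed
  also have "\<dots> = (\<Sum>m. \<integral>\<^sup>+ x. ennreal (c m) * indicator {real m..<real (Suc m)} x \<partial>lborel)"
    by (rule nn_integral_suminf) simp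
  also have "\<dots> = (\<Sum>m. ennreal (c m))"
    by (subst nn_integral_cmult_indicator) simp_all
  also have "\<dots> = ennreal (\<Sum>m. c m)"
    using c0 summ_c by (rule suminf_ennreal2)
  also have "\<dots> = 1" using sums_unique[OF cs] by simp
  finally show ?thesis .
qed

lemma probM: "prob_space M"
  by (rule prob_spaceI) (simp add: total)


lemma summ_D: "summable (\<lambda>m. \<bar>c (Suc m) - c m\<bar>)"
proof (rule summable_comparison_test')
  show "summable (\<lambda>m. c (Suc m) + c m)"
    using summ_c by (intro summable_add) (simp_all add: summable_Suc_iff)
  fix n show "norm \<bar>c (Suc n) - c n\<bar> \<le> c (Suc n) + c n"
    using c0[of n] c0[of "Suc n"] by simp
qed

lemma pointwise:
  assumes x: "0 \<le> x" and s: "0 \<le> s"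
  shows "\<bar>ff c x - ff c (x + s)\<bar> \<le> (\<Sum>m. \<bar>c (Suc m) - c m\<bar> * indicator {real (Suc m) - s..<real (Suc m)} x)"
proof -
  define n where "n = nat \<lfloor>x\<rfloor>"
  define p where "p = nat \<lfloor>x + s\<rfloor>"
  have fx: "ff c x = c n" using x by (simp add: ff_eq n_def)
  have fxs: "ff c (x + s) = c p" using x s by (simp add: ff_eq p_def)
  have np: "n \<le> p" unfolding n_def p_def using s by (intro nat_mono floor_mono) simp
  have ind: "indicator {real (Suc m) - s..<real (Suc m)} x = (1::real)" if m: "m \<in> {n..<p}" for m
  proof -
    have "Suc m \<le> nat \<lfloor>x + s\<rfloor>" using m p_def by simp
    then have "int (Suc m) \<le> \<lfloor>x + s\<rfloor>" by linarith
    then have "real (Suc m) \<le> real_of_int \<lfloor>x + s\<rfloor>"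
      by (metis of_int_le_iff of_int_of_nat_eq)
    also have "\<dots> \<le> x + s" by (rule of_int_floor_le)
    finally have a: "real (Suc m) - s \<le> x" by simp
    have "nat \<lfloor>x\<rfloor> \<le> m" using m n_def by simp
    then have "\<lfloor>x\<rfloor> \<le> int m" by linarith
    then have "real_of_int \<lfloor>x\<rfloor> \<le> real m"
      by (metis of_int_le_iff of_int_of_nat_eq)
    moreover have "x < real_of_int \<lfloor>x\<rfloor> + 1" using floor_correct[of x] by simp
    ultimately have "x < real m + 1" by linarith
    then have b: "x < real (Suc m)" by simp
    show ?thesis using a b by (simp add: indicator_def)
  qed
  have summ: "summable (\<lambda>m. \<bar>c (Suc m) - c m\<bar> * indicator {real (Suc m) - s..<real (Suc m)} x)"
  proof (rule summable_comparison_test'[OF summ_D])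
    fix m show "norm (\<bar>c (Suc m) - c m\<bar> * indicator {real (Suc m) - s..<real (Suc m)} x) \<le> \<bar>c (Suc m) - c m\<bar>"
      by (simp add: indicator_def)
  qed
  have "\<bar>ff c x - ff c (x + s)\<bar> = \<bar>\<Sum>m = n..<p. c (Suc m) - c m\<bar>"
    using sum_Suc_diff'[OF np, of c] fx fxs by simp
  also have "\<dots> \<le> (\<Sum>m = n..<p. \<bar>c (Suc m) - c m\<bar>)" by (rule sum_abs)
  also have "\<dots> = (\<Sum>m = n..<p. \<bar>c (Suc m) - c m\<bar> * indicator {real (Suc m) - s..<real (Suc m)} x)"
  proof (rule sum.cong[OF refl])
    fix m assume "m \<in> {n..<p}"
    then show "\<bar>c (Suc m) - c m\<bar> = \<bar>c (Suc m) - c m\<bar> * indicator {real (Suc m) - s..<real (Suc m)} x"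
      using ind[of m] by simp
  qed
  also have "\<dots> \<le> (\<Sum>m. \<bar>c (Suc m) - c m\<bar> * indicator {real (Suc m) - s..<real (Suc m)} x)"
    by (rule sum_le_suminf[OF summ]) (simp_all add: indicator_def)
  finally show ?thesis .
qed


lemma integral_bound:
  assumes Q: "Q \<in> sets borel" "Q \<subseteq> {0..}" and s: "0 \<le> s"
  shows "(\<integral>\<^sup>+ x. ennreal \<bar>ff c x - ff c (x + s)\<bar> * indicator Q x \<partial>lborel) \<le> ennreal (s * DD c)"
proof -
  have "(\<integral>\<^sup>+ x. ennreal \<bar>ff c x - ff c (x + s)\<bar> * indicator Q x \<partial>lborel)
     \<le> (\<integral>\<^sup>+ x. (\<Sum>m. ennreal \<bar>c (Suc m) - c m\<bar> * indicator {real (Suc m) - s..<real (Suc m)} x) \<partial>lborel)"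
  proof (rule nn_integral_mono)
    fix x
    show "ennreal \<bar>ff c x - ff c (x + s)\<bar> * indicator Q x \<le> (\<Sum>m. ennreal \<bar>c (Suc m) - c m\<bar> * indicator {real (Suc m) - s..<real (Suc m)} x)"
    proof (cases "x \<in> Q")
      case True
      then have x: "0 \<le> x" using Q by auto
      have summ: "summable (\<lambda>m. \<bar>c (Suc m) - c m\<bar> * indicator {real (Suc m) - s..<real (Suc m)} x)"
      proof (rule summable_comparison_test'[OF summ_D])
        fix m show "norm (\<bar>c (Suc m) - c m\<bar> * indicator {real (Suc m) - s..<real (Suc m)} x) \<le> \<bar>c (Suc m) - c m\<bar>"
          by (simp add: indicator_def)
      qed
      have "ennreal \<bar>ff c x - ff c (x + s)\<bar> \<le> ennreal (\<Sum>m. \<bar>c (Suc m) - c m\<bar> * indicator {real (Suc m) - s..<real (Suc m)} x)"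
        by (rule ennreal_leI) (rule pointwise[OF x s])
      also have "\<dots> = (\<Sum>m. ennreal (\<bar>c (Suc m) - c m\<bar> * indicator {real (Suc m) - s..<real (Suc m)} x))"
        by (rule suminf_ennreal2[symmetric, OF _ summ]) (simp add: indicator_def)
      also have "\<dots> = (\<Sum>m. ennreal \<bar>c (Suc m) - c m\<bar> * indicator {real (Suc m) - s..<real (Suc m)} x)"
        by (simp add: ennreal_mult' ennreal_indicator)
      finally show ?thesis using True by simp
    qed simp
  qed
  also have "\<dots> = (\<Sum>m. \<integral>\<^sup>+ x. ennreal \<bar>c (Suc m) - c m\<bar> * indicator {real (Suc m) - s..<real (Suc m)} x \<partial>lborel)"
    by (rule nn_integral_suminf) simp
  also have "\<dots> = (\<Sum>m. ennreal (\<bar>c (Suc m) - c m\<bar> * s))"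
    using s by (subst nn_integral_cmult_indicator) (simp_all add: ennreal_mult')
  also have "\<dots> = ennreal (\<Sum>m. \<bar>c (Suc m) - c m\<bar> * s)"
    by (rule suminf_ennreal2) (simp_all add: s summable_mult2[OF summ_D])
  also have "\<dots> = ennreal (DD c * s)"
    unfolding DD_def by (subst suminf_mult2[OF summ_D]) (rule refl)
  also have "\<dots> = ennreal (s * DD c)" by (simp only: mult.commute)
  finally show ?thesis .
qed

lemma emeasure_shift:
  assumes Q: "Q \<in> sets borel"
  shows "emeasure M ((\<lambda>x. x + s) ` Q) = (\<integral>\<^sup>+ x. ennreal (ff c (x + s)) * indicator Q x \<partial>lborel)"
proof -
  have Qs: "(\<lambda>x. x + s) ` Q \<in> sets borel" by (rule shift_sets[OF Q])
  have "emeasure M ((\<lambda>x. x + s) ` Q) = (\<integral>\<^sup>+ x. ennreal (ff c x) * indicator ((\<lambda>x. x + s) ` Q) x \<partial>lborel)"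
    by (rule emeasure_M[OF Qs])
  also have "\<dots> = (\<integral>\<^sup>+ x. ennreal (ff c (s + 1 * x)) * indicator ((\<lambda>x. x + s) ` Q) (s + 1 * x) \<partial>lborel)"
    using nn_integral_real_affine[of "\<lambda>x. ennreal (ff c x) * indicator ((\<lambda>x. x + s) ` Q) x" 1 s] Qs by simp
  also have "\<dots> = (\<integral>\<^sup>+ x. ennreal (ff c (x + s)) * indicator Q x \<partial>lborel)"
    by (simp add: shift_ind add.commute)
  finally show ?thesis .
qed

lemma one_side:
  assumes Q: "Q \<in> sets borel" "Q \<subseteq> {0..}" and s: "0 \<le> s"
  shows "measure M Q \<le> measure M ((\<lambda>x. x + s) ` Q) + s * DD c"
    and "measure M ((\<lambda>x. x + s) ` Q) \<le> measure M Q + s * DD c"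
proof -
  interpret prob_space M by (rule probM)
  have DD0: "0 \<le> DD c" unfolding DD_def by (rule suminf_nonneg[OF summ_D]) simp
  have m1: "(\<lambda>x. ennreal (ff c x) * indicator Q x) \<in> borel_measurable lborel" using Q by measurable
  have m2: "(\<lambda>x. ennreal (ff c (x + s)) * indicator Q x) \<in> borel_measurable lborel" using Q by measurable
  have m3: "(\<lambda>x. ennreal \<bar>ff c x - ff c (x + s)\<bar> * indicator Q x) \<in> borel_measurable lborel" using Q by measurable
  have B: "(\<integral>\<^sup>+ x. ennreal \<bar>ff c x - ff c (x + s)\<bar> * indicator Q x \<partial>lborel) \<le> ennreal (s * DD c)"
    by (rule integral_bound[OF Q s])
  have "emeasure M Q \<le> (\<integral>\<^sup>+ x. ennreal (ff c (x + s)) * indicator Q x + ennreal \<bar>ff c x - ff c (x + s)\<bar> * indicator Q x \<partial>lborel)"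
    unfolding emeasure_M[OF Q(1)]
    by (rule nn_integral_mono) (auto simp: indicator_def intro: enn_tri[OF ff_nonneg])
  also have "\<dots> = emeasure M ((\<lambda>x. x + s) ` Q) + (\<integral>\<^sup>+ x. ennreal \<bar>ff c x - ff c (x + s)\<bar> * indicator Q x \<partial>lborel)"
    by (subst nn_integral_add[OF m2 m3]) (simp add: emeasure_shift[OF Q(1)])
  also have "\<dots> \<le> emeasure M ((\<lambda>x. x + s) ` Q) + ennreal (s * DD c)"
    using B by (rule add_left_mono)
  finally have X: "emeasure M Q \<le> emeasure M ((\<lambda>x. x + s) ` Q) + ennreal (s * DD c)" .
  have "emeasure M ((\<lambda>x. x + s) ` Q) + ennreal (s * DD c) = ennreal (measure M ((\<lambda>x. x + s) ` Q) + s * DD c)"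
    using s DD0 by (simp add: emeasure_eq_measure measure_nonneg)
  with X have "ennreal (measure M Q) \<le> ennreal (measure M ((\<lambda>x. x + s) ` Q) + s * DD c)"
    by (simp add: emeasure_eq_measure)
  then show "measure M Q \<le> measure M ((\<lambda>x. x + s) ` Q) + s * DD c"
    using s DD0 by (subst (asm) ennreal_le_iff) (simp_all add: measure_nonneg)
  have "emeasure M ((\<lambda>x. x + s) ` Q) \<le> (\<integral>\<^sup>+ x. ennreal (ff c x) * indicator Q x + ennreal \<bar>ff c x - ff c (x + s)\<bar> * indicator Q x \<partial>lborel)"
    unfolding emeasure_shift[OF Q(1)]
  proof (rule nn_integral_mono)
    fix x
    have "ennreal (ff c (x + s)) \<le> ennreal (ff c x) + ennreal \<bar>ff c (x + s) - ff c x\<bar>"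
      by (rule enn_tri[OF ff_nonneg])
    also have "\<bar>ff c (x + s) - ff c x\<bar> = \<bar>ff c x - ff c (x + s)\<bar>" by (rule abs_minus_commute)
    finally show "ennreal (ff c (x + s)) * indicator Q x \<le> ennreal (ff c x) * indicator Q x + ennreal \<bar>ff c x - ff c (x + s)\<bar> * indicator Q x"
      by (simp add: indicator_def)
  qed
  also have "\<dots> = emeasure M Q + (\<integral>\<^sup>+ x. ennreal \<bar>ff c x - ff c (x + s)\<bar> * indicator Q x \<partial>lborel)"
    by (subst nn_integral_add[OF m1 m3]) (simp add: emeasure_M[OF Q(1)])
  also have "\<dots> \<le> emeasure M Q + ennreal (s * DD c)"
    using B by (rule add_left_mono)
  finally have X: "emeasure M ((\<lambda>x. x + s) ` Q) \<le> emeasure M Q + ennreal (s * DD c)" .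
  have "emeasure M Q + ennreal (s * DD c) = ennreal (measure M Q + s * DD c)"
    using s DD0 by (simp add: emeasure_eq_measure measure_nonneg)
  with X have "ennreal (measure M ((\<lambda>x. x + s) ` Q)) \<le> ennreal (measure M Q + s * DD c)"
    by (simp add: emeasure_eq_measure)
  then show "measure M ((\<lambda>x. x + s) ` Q) \<le> measure M Q + s * DD c"
    using s DD0 by (subst (asm) ennreal_le_iff) (simp_all add: measure_nonneg)
qed


lemma measure_I: "measure M {real m..<real (Suc m)} = c m"
  by (simp only: measure_def emeasure_I) (simp add: c0)

lemma meas_bounds: "0 \<le> measure M A" "measure M A \<le> 1"
proof -
  interpret prob_space M by (rule probM)
  show "0 \<le> measure M A" by (rule measure_nonneg)
  show "measure M A \<le> 1" by (rule prob_le_1)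
qed

lemma bddTV: "bdd_above ((\<lambda>Q. \<bar>measure M Q - measure M ((\<lambda>x. x + s) ` Q)\<bar>) ` {Q. Q \<in> sets borel \<and> Q \<subseteq> {0..}})"
proof (rule bdd_aboveI)
  fix y assume "y \<in> (\<lambda>Q. \<bar>measure M Q - measure M ((\<lambda>x. x + s) ` Q)\<bar>) ` {Q. Q \<in> sets borel \<and> Q \<subseteq> {0..}}"
  then obtain Q where "y = \<bar>measure M Q - measure M ((\<lambda>x. x + s) ` Q)\<bar>" by blast
  then show "y \<le> 1" using meas_bounds[of Q] meas_bounds[of "(\<lambda>x. x + s) ` Q"] by linarith
qed

lemma TV_nonneg: "0 \<le> TV M s"
  unfolding TV_def by (rule cSUP_upper2[OF bddTV, of "{}"]) auto

lemma TV_le1: "TV M s \<le> 1"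
  unfolding TV_def
proof (rule cSUP_least)
  show "{Q. Q \<in> sets borel \<and> Q \<subseteq> {0..}} \<noteq> {}" by auto
  fix Q :: "real set" show "\<bar>measure M Q - measure M ((\<lambda>x. x + s) ` Q)\<bar> \<le> 1"
    using meas_bounds[of Q] meas_bounds[of "(\<lambda>x. x + s) ` Q"] by linarith
qed

lemma TV_le: assumes s: "0 \<le> s" shows "TV M s \<le> s * DD c"
  unfolding TV_def
proof (rule cSUP_least)
  show "{Q. Q \<in> sets borel \<and> Q \<subseteq> {0..}} \<noteq> {}" by auto
  fix Q :: "real set" assume "Q \<in> {Q. Q \<in> sets borel \<and> Q \<subseteq> {0..}}"
  then have Q: "Q \<in> sets borel" "Q \<subseteq> {0..}" by auto
  show "\<bar>measure M Q - measure M ((\<lambda>x. x + s) ` Q)\<bar> \<le> s * DD c"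
    using one_side[OF Q s] by linarith
qed

lemma lower: "DD c \<le> 2 * TV M 1"
proof -
  have step: "(\<Sum>m<N. max 0 (c m - c (Suc m))) \<le> TV M 1" for N
  proof -
    define S where "S = {m\<in>{..<N}. c (Suc m) < c m}"
    define Q where "Q = (\<Union>m\<in>S. {real m..<real (Suc m)})"
    have fS: "finite S" by (simp add: S_def)
    have Qb: "Q \<in> sets borel" unfolding Q_def using fS by (intro sets.finite_UN) auto
    have Q0: "Q \<subseteq> {0..}" by (auto simp: Q_def)
    have Qs: "(\<lambda>x. x + 1) ` Q = (\<Union>m\<in>S. {real (Suc m)..<real (Suc (Suc m))})"
      by (simp only: Q_def image_UN shift_Ico)
    have mQ: "measure M Q = (\<Sum>m\<in>S. c m)"
    proof -
      have "measure M Q = (\<Sum>m\<in>S. measure M {real m..<real (Suc m)})"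
        unfolding Q_def
      proof (rule measure_finite_Union[OF fS])
        show "(\<lambda>m. {real m..<real (Suc m)}) ` S \<subseteq> sets M" by auto
        show "disjoint_family_on (\<lambda>m. {real m..<real (Suc m)}) S"
          unfolding disjoint_family_on_def using Ico_disj by blast
        fix i show "emeasure M {real i..<real (Suc i)} \<noteq> \<infinity>" by (simp only: emeasure_I) simp
      qed
      then show ?thesis by (simp only: measure_I)
    qed
    have mQs: "measure M ((\<lambda>x. x + 1) ` Q) = (\<Sum>m\<in>S. c (Suc m))"
    proof -
      have "measure M ((\<lambda>x. x + 1) ` Q) = (\<Sum>m\<in>S. measure M {real (Suc m)..<real (Suc (Suc m))})"
        unfolding Qs
      proof (rule measure_finite_Union[OF fS])
        show "(\<lambda>m. {real (Suc m)..<real (Suc (Suc m))}) ` S \<subseteq> sets M" by auto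
        show "disjoint_family_on (\<lambda>m. {real (Suc m)..<real (Suc (Suc m))}) S"
          unfolding disjoint_family_on_def using Ico_disj by blast
        fix i show "emeasure M {real (Suc i)..<real (Suc (Suc i))} \<noteq> \<infinity>" by (simp only: emeasure_I) simp
      qed
      then show ?thesis by (simp only: measure_I)
    qed
    have "(\<Sum>m<N. max 0 (c m - c (Suc m))) = (\<Sum>m\<in>S. c m - c (Suc m))"
      unfolding S_def by (subst sum.inter_filter) (auto simp: max_def intro!: sum.cong)
    also have "\<dots> = measure M Q - measure M ((\<lambda>x. x + 1) ` Q)"
      by (simp add: mQ mQs sum_subtractf)
    also have "\<dots> \<le> \<bar>measure M Q - measure M ((\<lambda>x. x + 1) ` Q)\<bar>" by simp
    also have "\<dots> \<le> TV M 1"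
      unfolding TV_def by (rule cSUP_upper2[OF bddTV, of Q]) (use Qb Q0 in auto)
    finally show ?thesis .
  qed
  have summP: "summable (\<lambda>m. max 0 (c m - c (Suc m)))"
  proof (rule summable_comparison_test')
    show "summable (\<lambda>m. c (Suc m) + c m)"
      using summ_c by (intro summable_add) (simp_all add: summable_Suc_iff)
    fix n show "norm (max 0 (c n - c (Suc n))) \<le> c (Suc n) + c n"
      using c0[of n] c0[of "Suc n"] by (simp add: max_def)
  qed
  have P: "(\<Sum>m. max 0 (c m - c (Suc m))) \<le> TV M 1"
    by (rule suminf_le_const[OF summP step])
  have tel: "(\<lambda>m. c m - c (Suc m)) sums (c 0 - 0)"
    by (rule telescope_sums'[OF summable_LIMSEQ_zero[OF summ_c]])
  have eq: "(\<lambda>m. \<bar>c (Suc m) - c m\<bar>) = (\<lambda>m. 2 * max 0 (c m - c (Suc m)) - (c m - c (Suc m)))"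
    by (auto simp: max_def)
  have "(\<lambda>m. \<bar>c (Suc m) - c m\<bar>) sums (2 * (\<Sum>m. max 0 (c m - c (Suc m))) - (c 0 - 0))"
    unfolding eq by (intro sums_diff sums_mult summable_sums[OF summP] tel)
  then have "DD c = 2 * (\<Sum>m. max 0 (c m - c (Suc m))) - c 0"
    unfolding DD_def by (simp add: sums_unique[symmetric])
  then show ?thesis using P c0[of 0] by linarith
qed

end

theorem mainTheorem4:
  fixes \<xi> :: "nat \<Rightarrow> nat \<Rightarrow> real" and \<theta> :: "nat \<Rightarrow> real measure"
  assumes nonneg: "\<forall>k m. m \<ge> 1 \<longrightarrow> \<xi> k m \<ge> 0"
    and prob: "\<forall>k. (\<lambda>m. \<xi> k (Suc m)) sums 1"
    and dens: "\<forall>k. \<theta> k = density lborel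
        (\<lambda>x. ennreal (\<Sum>m. \<xi> k (Suc m) * indicator {real m..<real (Suc m)} x))"
  shows "LTC \<theta> \<longleftrightarrow> (\<lambda>k. \<Sum>m. \<bar>\<xi> k (Suc (Suc m)) - \<xi> k (Suc m)\<bar>) \<longlonglongrightarrow> 0"
proof -
  define Dk where "Dk k = (\<Sum>m. \<bar>\<xi> k (Suc (Suc m)) - \<xi> k (Suc m)\<bar>)" for k
  have c0: "\<And>m. 0 \<le> \<xi> k (Suc m)" for k using nonneg by simp
  have cs: "(\<lambda>m. \<xi> k (Suc m)) sums 1" for k using prob by simp
  have M: "\<theta> k = density lborel (\<lambda>x. ennreal (ff (\<lambda>m. \<xi> k (Suc m)) x))" for k
    using dens by (simp add: ff_def)
  have DDk: "DD (\<lambda>m. \<xi> k (Suc m)) = Dk k" for k by (simp add: DD_def Dk_def)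
  have up: "TV (\<theta> k) s \<le> s * Dk k" if "0 \<le> s" for k s
    using TV_le[OF c0 cs M that] DDk by simp
  have low: "Dk k \<le> 2 * TV (\<theta> k) 1" for k
    using lower[OF c0 cs M] DDk by simp
  have nn: "0 \<le> TV (\<theta> k) s" for k s by (rule TV_nonneg[OF c0 cs M])
  have le1: "TV (\<theta> k) s \<le> 1" for k s by (rule TV_le1[OF c0 cs M])
  have Dnn: "0 \<le> Dk k" for k
    unfolding Dk_def using summ_D[OF c0 cs] by (intro suminf_nonneg) simp_all
  have bdd: "bdd_above ((\<lambda>s. TV (\<theta> k) s) ` A)" for k A
    using le1 by (intro bdd_aboveI) auto
  show ?thesis
  proof
    assume "LTC \<theta>"
    then have L: "(\<lambda>k. SUP s \<in> {0..1}. TV (\<theta> k) s) \<longlonglongrightarrow> 0" unfolding LTC_def by simp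
    have "(\<lambda>k. 2 * (SUP s \<in> {0..1}. TV (\<theta> k) s)) \<longlonglongrightarrow> 2 * 0"
      by (intro tendsto_mult tendsto_const L)
    then have L2: "(\<lambda>k. 2 * (SUP s \<in> {0..1}. TV (\<theta> k) s)) \<longlonglongrightarrow> 0" by simp
    have "Dk k \<le> 2 * (SUP s \<in> {0..1}. TV (\<theta> k) s)" for k
    proof -
      have "TV (\<theta> k) 1 \<le> (SUP s \<in> {0..1}. TV (\<theta> k) s)"
        by (rule cSUP_upper[OF _ bdd]) simp
      then show ?thesis using low[of k] by linarith
    qed
    then have "Dk \<longlonglongrightarrow> 0"
      by (intro tendsto_sandwich[OF _ _ tendsto_const L2]) (simp_all add: Dnn)
    then show "(\<lambda>k. \<Sum>m. \<bar>\<xi> k (Suc (Suc m)) - \<xi> k (Suc m)\<bar>) \<longlonglongrightarrow> 0"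
      by (simp add: Dk_def[abs_def])
  next
    assume "(\<lambda>k. \<Sum>m. \<bar>\<xi> k (Suc (Suc m)) - \<xi> k (Suc m)\<bar>) \<longlonglongrightarrow> 0"
    then have D0: "Dk \<longlonglongrightarrow> 0" by (simp add: Dk_def[abs_def])
    show "LTC \<theta>"
      unfolding LTC_def
    proof (intro allI impI)
      fix S :: real assume S: "S > 0"
      have "(\<lambda>k. S * Dk k) \<longlonglongrightarrow> S * 0" by (intro tendsto_mult tendsto_const D0)
      then have L: "(\<lambda>k. S * Dk k) \<longlonglongrightarrow> 0" by simp
      have lo: "0 \<le> (SUP s \<in> {0..S}. TV (\<theta> k) s)" for k
        by (rule cSUP_upper2[OF bdd, of 0]) (use S nn in auto)
      have hi: "(SUP s \<in> {0..S}. TV (\<theta> k) s) \<le> S * Dk k" for k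
      proof (rule cSUP_least)
        show "{0..S} \<noteq> {}" using S by simp
        fix s assume "s \<in> {0..S}"
        then have s: "0 \<le> s" "s \<le> S" by auto
        have "TV (\<theta> k) s \<le> s * Dk k" by (rule up[OF s(1)])
        also have "\<dots> \<le> S * Dk k" by (rule mult_right_mono[OF s(2) Dnn])
        finally show "TV (\<theta> k) s \<le> S * Dk k" .
      qed
      show "(\<lambda>k. SUP s \<in> {0..S}. TV (\<theta> k) s) \<longlonglongrightarrow> 0"
        by (intro tendsto_sandwich[OF _ _ tendsto_const L]) (simp_all add: lo hi)
    qed
  qed
qed

end
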